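(* Let $\alpha>2$ and consider the equation in the unknown $\Lambda>0$ \[ \int_0^\infty\frac{1-\Lambda x^{2/\alpha}}{1+x}\,e^{-2\Lambda x^{2/\alpha}}\,dx=0 . \] If $\alpha\le4$ this equation has no solution $\Lambda>0$, and if $\alpha>4$ it has exactly one solution $\Lambda>0$.
   Context: The solution for $\alpha>4$ is denoted $\Lambda''(\alpha)$ in the paper. *)

theory Defs
  imports "HOL-Analysis.Analysis"
begin

definition lam_integrand :: "real \<Rightarrow> real \<Rightarrow> real \<Rightarrow> real" where
  "lam_integrand \<alpha> \<Lambda> x =
     (1 - \<Lambda> * x powr (2 / \<alpha>)) / (1 + x) * exp (- 2 * \<Lambda> * x powr (2 / \<alpha>))"

end

theory Submission
  imports Defs
begin


definition phi :: "real \<Rightarrow> real \<Rightarrow> real" where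
  "phi b y = (1 - y powr b) * exp (- 2 * y powr b)"
definition kk :: "real \<Rightarrow> real \<Rightarrow> real \<Rightarrow> real" where
  "kk b c y = phi b y / (c + y)"

lemma cont_powr0: "b > 0 \<Longrightarrow> continuous_on {0..} (\<lambda>y::real. y powr b)"
  by (intro continuous_on_powr') (auto intro: continuous_intros)

lemma cont_kk: "b > 0 \<Longrightarrow> c > 0 \<Longrightarrow> continuous_on {0..} (kk b c)"
  unfolding kk_def phi_def
  by (intro continuous_intros cont_powr0) auto

lemma cube_aux:
  fixes X M y :: real
  assumes "(1+y)^3 * X \<le> M" "y \<ge> 0"
  shows "(1+y) * X \<le> M / (1+y)^2"
proof -
  have "(1+y) * X * (1+y)^2 \<le> M" using assms(1) by (simp add: power3_eq_cube power2_eq_square algebra_simps)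
  then show ?thesis using assms(2) by (simp add: field_simps)
qed

lemma exp_bound:
  fixes b :: real
  assumes "b > 0"
  shows "\<exists>M>0. \<forall>y\<ge>0. (1+y) * exp (-(y powr b)) \<le> M / (1+y)^2"
proof -
  define n where "n = nat \<lceil>3/b\<rceil> + 1"
  have n1: "n \<ge> 1" unfolding n_def by simp
  have "real n \<ge> 3/b" unfolding n_def using real_nat_ceiling_ge[of "3/b"] by simp
  then have nb: "real n * b \<ge> 3" using assms by (simp add: field_simps)
  define M where "M = 8 * real n ^ n"
  have M8: "M \<ge> 8" using n1 unfolding M_def
    by (simp add: one_le_power)
  have "(1+y) * exp (-(y powr b)) \<le> M / (1+y)^2" if y: "y \<ge> 0" for y
  proof (cases "y \<le> 1")
    case True
    have "(1+y)^3 \<le> 2^3" using True y by (intro power_mono) auto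
    then have "(1+y)^3 \<le> 8" by simp
    moreover have "exp (-(y powr b)) \<le> 1" by simp
    ultimately have "(1+y)^3 * exp (-(y powr b)) \<le> M" using M8
      by (smt (verit) exp_gt_zero mult_left_le zero_le_power y)
    then show ?thesis using y by (rule cube_aux)
  next
    case False
    then have y1: "y \<ge> 1" by simp
    have "(1 + y powr b / real n) ^ n \<le> exp (y powr b)"
      using n1 by (intro exp_ge_one_plus_x_over_n_power_n) (auto intro: order_trans[of _ 0])
    moreover have "(y powr b / real n) ^ n \<le> (1 + y powr b / real n) ^ n"
      by (intro power_mono) auto
    moreover have "(y powr b / real n) ^ n = y powr (real n * b) / real n ^ n"
      using y1 by (simp add: power_divide powr_realpow[symmetric] powr_powr mult.commute)
    moreover have "y ^ 3 \<le> y powr (real n * b)"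
    proof -
      have "y ^ 3 = y powr 3" using y1 by (simp add: powr_realpow)
      also have "\<dots> \<le> y powr (real n * b)" using y1 nb by (intro powr_mono) auto
      finally show ?thesis .
    qed
    ultimately have "y powr (real n * b) / real n ^ n \<le> exp (y powr b)" by linarith
    then have "y powr (real n * b) \<le> real n ^ n * exp (y powr b)"
      using n1 by (simp add: divide_le_eq mult.commute)
    then have A: "y ^ 3 \<le> real n ^ n * exp (y powr b)"
      using \<open>y ^ 3 \<le> y powr (real n * b)\<close> by linarith
    have B: "(1+y)^3 \<le> 8 * y^3" using y1
    proof -
      have "1 + y \<le> 2*y" using y1 by simp
      then have "(1+y)^3 \<le> (2*y)^3" by (intro power_mono) auto
      then show ?thesis by simp
    qed
    have "(1+y)^3 \<le> M * exp (y powr b)" using A B unfolding M_def by simp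
    then have "(1+y)^3 * exp (-(y powr b)) \<le> M"
      by (simp add: exp_minus field_simps)
    then show ?thesis using y by (rule cube_aux)
  qed
  then show ?thesis using M8 by (intro exI[of _ M]) auto
qed



lemma phi_bound:
  fixes b y :: real assumes "y \<ge> 0"
  shows "\<bar>phi b y\<bar> \<le> exp (-(y powr b))"
proof -
  define t where "t = y powr b"
  have t0: "t \<ge> 0" unfolding t_def by simp
  have "\<bar>1 - t\<bar> \<le> 1 + t" using t0 by simp
  also have "\<dots> \<le> exp t" by (rule exp_ge_add_one_self)
  finally have "\<bar>1 - t\<bar> * exp (-2*t) \<le> exp t * exp (-2*t)" by (intro mult_right_mono) auto
  also have "exp t * exp (-2*t) = exp (-t)" by (simp add: exp_add[symmetric])
  finally show ?thesis unfolding phi_def t_def by (simp add: abs_mult)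
qed

lemma dom_int: "((\<lambda>y::real. 1/(1+y)^2) has_integral 1) {0..}"
proof (rule has_integral_to_inf)
  fix y :: real
  show "(\<lambda>y::real. 1/(1+y)^2) integrable_on {0..y}"
    by (intro integrable_continuous_interval continuous_intros) auto
next
  have "((\<lambda>y::real. 1/(1+y)^2) has_integral ((- 1/(1+y)) - (- 1/(1+0)))) {0..y}" if "y \<ge> 0" for y :: real
    using that
    by (intro fundamental_theorem_of_calculus)
       (auto intro!: derivative_eq_intros simp: power2_eq_square field_simps
             simp flip: has_real_derivative_iff_has_vector_derivative)
  then have "\<forall>\<^sub>F y in at_top. integral {0..y} (\<lambda>y::real. 1/(1+y)^2) = 1 - 1/(1+y)"
    by (intro eventually_at_top_linorderI[of 0]) (auto dest: integral_unique)
  moreover have "((\<lambda>y::real. 1 - 1/(1+y)) \<longlongrightarrow> 1) at_top" by real_asymp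
  ultimately show "((\<lambda>y. integral {0..y} (\<lambda>y::real. 1/(1+y)^2)) \<longlongrightarrow> 1) at_top"
    by (simp add: filterlim_cong)
qed auto

lemma kk_dom:
  fixes b :: real assumes "b > 0"
  shows "\<exists>M>0. \<forall>c y. c > 0 \<longrightarrow> y \<ge> 0 \<longrightarrow> \<bar>kk b c y\<bar> \<le> (M / c) / (1+y)^2"
proof -
  obtain M where M: "M > 0" "\<forall>y\<ge>0. (1+y) * exp (-(y powr b)) \<le> M / (1+y)^2"
    using exp_bound[OF assms] by blast
  have "\<bar>kk b c y\<bar> \<le> (M / c) / (1+y)^2" if "c > 0" "y \<ge> 0" for c y
  proof -
    have "\<bar>kk b c y\<bar> = \<bar>phi b y\<bar> / (c+y)" unfolding kk_def using that by (simp add: abs_divide)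
    also have "\<dots> \<le> exp (-(y powr b)) / c"
      using that phi_bound[of y b] by (intro frac_le) auto
    also have "\<dots> \<le> ((1+y) * exp (-(y powr b))) / c"
      using that by (intro divide_right_mono) auto
    also have "\<dots> \<le> (M / (1+y)^2) / c"
      using that M by (intro divide_right_mono) auto
    finally show ?thesis by (simp add: field_simps)
  qed
  then show ?thesis using M by blast
qed

lemma abs_int_kk:
  fixes b c :: real assumes "b > 0" "c > 0"
  shows "kk b c absolutely_integrable_on {0..}"
proof -
  obtain M where M: "M > 0" "\<forall>c y. c > 0 \<longrightarrow> y \<ge> 0 \<longrightarrow> \<bar>kk b c y\<bar> \<le> (M / c) / (1+y)^2"
    using kk_dom[OF assms(1)] by blast
  show ?thesis
  proof (rule measurable_bounded_by_integrable_imp_absolutely_integrable)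
    show "kk b c \<in> borel_measurable (lebesgue_on {0..})"
      by (intro continuous_imp_measurable_on_sets_lebesgue cont_kk assms) auto
    show "{0::real..} \<in> sets lebesgue" by (intro sets_completionI_sets) (simp add: borel_closed)
    show "(\<lambda>y. (M / c) * (1/(1+y)^2)) integrable_on {0..}"
      using has_integral_mult_right[OF dom_int, of "M/c"] by (auto simp: integrable_on_def)
    show "norm (kk b c y) \<le> (M / c) * (1/(1+y)^2)" if "y \<in> {0..}" for y
      using M that assms by auto
  qed
qed

lemma L_tail:
  fixes f :: "real \<Rightarrow> real"
  assumes "f absolutely_integrable_on {0..}"
  shows "((\<lambda>b. integral {0..b} f) \<longlongrightarrow> integral {0..} f) at_top"
proof -
  have si: "set_integrable lebesgue {0..} f" using assms by (simp add: absolutely_integrable_on_def)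
  have "((\<lambda>b. set_lebesgue_integral lebesgue {0..b} f) \<longlongrightarrow> set_lebesgue_integral lebesgue {0..} f) at_top"
    by (intro tendsto_set_lebesgue_integral_at_top si) auto
  moreover have "set_lebesgue_integral lebesgue {0..} f = integral {0..} f"
    using set_lebesgue_integral_eq_integral(2)[OF si] .
  moreover have "set_lebesgue_integral lebesgue {0..b} f = integral {0..b} f" for b
    using set_lebesgue_integral_eq_integral(2)[OF set_integrable_subset[OF si]] by auto
  ultimately show ?thesis by simp
qed



definition ee :: "real \<Rightarrow> real \<Rightarrow> real" where "ee b y = exp (-2 * y powr b)"
definition HH :: "real \<Rightarrow> real \<Rightarrow> real \<Rightarrow> real" where "HH b c y = y * ee b y / (c + y)"
definition Ppos :: "real \<Rightarrow> real \<Rightarrow> real \<Rightarrow> real" where "Ppos b c y = ee b y * y / (c + y)^2"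
definition Pneg :: "real \<Rightarrow> real \<Rightarrow> real \<Rightarrow> real" where "Pneg b c y = ee b y * y powr b / (c + y)"

lemma alg1:
  fixes E t b c y :: real assumes "c + y \<noteq> 0" "y \<noteq> 0"
  shows "((E + y*(E*(-2*(b*t/y))))*(c+y) - y*E)/(c+y)^2 = (1-t)*E/(c+y) - E*y/(c+y)^2 - (2*b-1)*(E*t/(c+y))"
proof -
  have "(E + y*(E*(-2*(b*t/y)))) = E - 2*b*t*E" using assms by simp
  then have "((E + y*(E*(-2*(b*t/y))))*(c+y) - y*E)/(c+y)^2 = ((E - 2*b*t*E)*(c+y) - y*E)/(c+y)^2" by simp
  also have "\<dots> = (E - 2*b*t*E)/(c+y) - y*E/(c+y)^2" using assms by (simp add: diff_divide_distrib power2_eq_square)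
  also have "(E - 2*b*t*E) = (1-t)*E - (2*b-1)*(E*t)" by (simp add: algebra_simps)
  finally show ?thesis by (simp add: diff_divide_distrib mult.commute)
qed

lemma HH_deriv:
  fixes b c y :: real assumes "c > 0" "y > 0"
  shows "(HH b c has_real_derivative (kk b c y - Ppos b c y - (2*b-1) * Pneg b c y)) (at y)"
proof -
  have eq: "y powr (b - 1) * y = y powr b" using assms by (simp add: powr_diff)
  have "((\<lambda>y. y * exp (-2 * y powr b) / (c + y)) has_real_derivative
     ((exp (-2 * y powr b) + y * (exp (-2 * y powr b) * (-2 * (b * y powr b / y)))) * (c+y) - y * exp (-2 * y powr b)) / (c+y)^2) (at y)"
    using assms eq by (auto intro!: derivative_eq_intros simp: power2_eq_square)
  moreover have "((exp (-2 * y powr b) + y * (exp (-2 * y powr b) * (-2 * (b * y powr b / y)))) * (c+y) - y * exp (-2 * y powr b)) / (c+y)^2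
     = kk b c y - Ppos b c y - (2*b-1) * Pneg b c y"
    using assms unfolding kk_def phi_def Ppos_def Pneg_def ee_def
    by (subst alg1) (auto simp: mult.commute)
  ultimately show ?thesis unfolding HH_def ee_def by simp
qed



lemma cont_ee: "b > 0 \<Longrightarrow> continuous_on {0..} (ee b)"
  unfolding ee_def by (intro continuous_intros cont_powr0)
lemma cont_HH: "b > 0 \<Longrightarrow> c > 0 \<Longrightarrow> continuous_on {0..} (HH b c)"
  unfolding HH_def by (intro continuous_intros cont_ee) auto
lemma cont_Ppos: "b > 0 \<Longrightarrow> c > 0 \<Longrightarrow> continuous_on {0..} (Ppos b c)"
  unfolding Ppos_def by (intro continuous_intros cont_ee) auto
lemma cont_Pneg: "b > 0 \<Longrightarrow> c > 0 \<Longrightarrow> continuous_on {0..} (Pneg b c)"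
  unfolding Pneg_def by (intro continuous_intros cont_ee cont_powr0) auto

lemma int_sub: "continuous_on {0..} f \<Longrightarrow> (f::real\<Rightarrow>real) integrable_on {0..B}"
  by (rule integrable_continuous_interval) (auto elim: continuous_on_subset)

lemma decomp:
  fixes b c B :: real assumes "b > 0" "c > 0" "B \<ge> 0"
  shows "((\<lambda>y. kk b c y - Ppos b c y - (2*b-1) * Pneg b c y) has_integral HH b c B) {0..B}"
proof -
  have "((\<lambda>y. kk b c y - Ppos b c y - (2*b-1) * Pneg b c y) has_integral HH b c B - HH b c 0) {0..B}"
  proof (rule fundamental_theorem_of_calculus_interior_strong[where S="{}"])
    show "continuous_on {0..B} (HH b c)"
      using cont_HH[OF assms(1,2)] by (auto elim: continuous_on_subset)
    show "(HH b c has_vector_derivative kk b c x - Ppos b c x - (2 * b - 1) * Pneg b c x) (at x)"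
      if "x \<in> {0<..<B} - {}" for x
      using HH_deriv[OF assms(2), of x b] that
      by (simp add: has_real_derivative_iff_has_vector_derivative)
  qed (use assms in auto)
  then show ?thesis by (simp add: HH_def)
qed

lemma decomp_int:
  fixes b c B :: real assumes "b > 0" "c > 0" "B \<ge> 0"
  shows "integral {0..B} (kk b c) = HH b c B + integral {0..B} (Ppos b c) + (2*b-1) * integral {0..B} (Pneg b c)"
proof -
  have i1: "kk b c integrable_on {0..B}" by (intro int_sub cont_kk assms)
  have i2: "Ppos b c integrable_on {0..B}" by (intro int_sub cont_Ppos assms)
  have i3: "Pneg b c integrable_on {0..B}" by (intro int_sub cont_Pneg assms)
  have "((\<lambda>y. kk b c y - Ppos b c y - (2*b-1) * Pneg b c y) has_integral
      (integral {0..B} (kk b c) - integral {0..B} (Ppos b c) - (2*b-1) * integral {0..B} (Pneg b c))) {0..B}"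
    using i1 i2 i3 by (intro has_integral_diff has_integral_mult_right integrable_integral)
  with decomp[OF assms] have "HH b c B = integral {0..B} (kk b c) - integral {0..B} (Ppos b c) - (2*b-1) * integral {0..B} (Pneg b c)"
    using has_integral_unique by blast
  then show ?thesis by simp
qed

lemma int_Gneg:
  fixes b B :: real assumes "b > 0" "B \<ge> 0"
  shows "((\<lambda>y. y powr (b-1) * ee b y) has_integral (1 - ee b B) / (2*b)) {0..B}"
proof -
  have "((\<lambda>y. y powr (b-1) * ee b y) has_integral ((- ee b B / (2*b)) - (- ee b 0 / (2*b)))) {0..B}"
  proof (rule fundamental_theorem_of_calculus_interior_strong[where S="{}"])
    show "continuous_on {0..B} (\<lambda>y. - ee b y / (2*b))"
      using cont_ee[OF assms(1)] assms by (auto intro!: continuous_intros elim: continuous_on_subset)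
    show "((\<lambda>y. - ee b y / (2*b)) has_vector_derivative x powr (b-1) * ee b x) (at x)"
      if "x \<in> {0<..<B} - {}" for x
    proof -
      have x: "x > 0" using that by auto
      have eq: "x powr (b - 1) = x powr b / x" using x by (simp add: powr_diff)
      have "((\<lambda>y. - exp (-2 * y powr b) / (2*b)) has_real_derivative x powr (b-1) * exp (-2 * x powr b)) (at x)"
        using x assms eq by (auto intro!: derivative_eq_intros simp: field_simps)
      then show ?thesis unfolding ee_def by (simp add: has_real_derivative_iff_has_vector_derivative)
    qed
  qed (use assms in auto)
  then show ?thesis by (simp add: ee_def diff_divide_distrib)
qed

lemma int_ypos:
  fixes c :: real assumes "c > 0"
  shows "((\<lambda>y. y / (c+y)^2) has_integral (ln (c+1) + c/(c+1) - ln c - 1)) {0..1}"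
proof -
  have "((\<lambda>y. y / (c+y)^2) has_integral ((ln (c+1) + c/(c+1)) - (ln (c+0) + c/(c+0)))) {0..1}"
  proof (rule fundamental_theorem_of_calculus)
    show "((\<lambda>y. ln (c+y) + c/(c+y)) has_vector_derivative x / (c+x)^2) (at x within {0..1})"
      if "x \<in> {0..1}" for x
    proof -
      have D: "c + x > 0" using that assms by auto
      have al: "1/D - c/D^2 = (D - c)/D^2" if "D > 0" for D :: real
        using that by (simp add: field_simps power2_eq_square)
      have "((\<lambda>y. ln (c+y) + c/(c+y)) has_real_derivative (1/(c+x) - c/(c+x)^2)) (at x within {0..1})"
        using D by (auto intro!: derivative_eq_intros simp: power2_eq_square)
      then have "((\<lambda>y. ln (c+y) + c/(c+y)) has_real_derivative x / (c+x)^2) (at x within {0..1})"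
        using al[OF D] by simp
      then show ?thesis by (simp add: has_real_derivative_iff_has_vector_derivative)
    qed
  qed simp
  then show ?thesis using assms by (simp add: algebra_simps)
qed



lemma ee_pos: "ee b y > 0" by (simp add: ee_def)
lemma ee_ge: "b > 0 \<Longrightarrow> 0 \<le> y \<Longrightarrow> y \<le> 1 \<Longrightarrow> ee b y \<ge> exp (-2)"
proof -
  assume a: "b > 0" "0 \<le> y" "y \<le> 1"
  have "y powr b \<le> 1 powr b" using a by (intro powr_mono2) auto
  then show ?thesis unfolding ee_def by simp
qed
lemma Ppos_nn: "c > 0 \<Longrightarrow> y \<ge> 0 \<Longrightarrow> Ppos b c y \<ge> 0"
  unfolding Ppos_def using ee_pos[of b y] by simp
lemma Pneg_nn: "c > 0 \<Longrightarrow> y \<ge> 0 \<Longrightarrow> Pneg b c y \<ge> 0"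
  unfolding Pneg_def using ee_pos[of b y] by simp
lemma HH_nn: "c > 0 \<Longrightarrow> y \<ge> 0 \<Longrightarrow> HH b c y \<ge> 0"
  unfolding HH_def using ee_pos[of b y] by simp

lemma int_y: "((\<lambda>y::real. y) has_integral 1/2) {0..1}"
proof -
  have "((\<lambda>y::real. y) has_integral (1^2/2 - 0^2/2)) {0..1}"
    by (intro fundamental_theorem_of_calculus)
       (auto intro!: derivative_eq_intros simp flip: has_real_derivative_iff_has_vector_derivative)
  then show ?thesis by simp
qed

lemma sub01: "B \<ge> 1 \<Longrightarrow> continuous_on {0..} f \<Longrightarrow> (\<And>y. y \<ge> 0 \<Longrightarrow> f y \<ge> 0) \<Longrightarrow>
   integral {0..1} f \<le> integral {0..B} (f::real\<Rightarrow>real)"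
  by (intro integral_subset_le int_sub) auto

lemma lower_Ppos:
  fixes b c B :: real assumes "b > 0" "c > 0" "B \<ge> 1"
  shows "integral {0..B} (Ppos b c) \<ge> exp (-2) * (ln (c+1) + c/(c+1) - ln c - 1)"
    and "integral {0..B} (Ppos b c) \<ge> exp (-2) / (2 * (c+1)^2)"
proof -
  have s: "integral {0..1} (Ppos b c) \<le> integral {0..B} (Ppos b c)"
    using assms by (intro sub01 cont_Ppos Ppos_nn) auto
  have iy: "(\<lambda>y. y / (c+y)^2) integrable_on {0..1}" using int_ypos[OF assms(2)] by blast
  have ip: "Ppos b c integrable_on {0..1}" using assms by (intro int_sub cont_Ppos) auto
  have le1: "integral {0..1} (\<lambda>y. exp (-2) * (y / (c+y)^2)) \<le> integral {0..1} (Ppos b c)"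
  proof (rule integral_le)
    show "(\<lambda>y. exp (-2) * (y / (c+y)^2)) integrable_on {0..1}"
      using iy by (rule integrable_on_mult_right)
    show "exp (-2) * (y / (c+y)^2) \<le> Ppos b c y" if "y \<in> {0..1}" for y
    proof -
      have "exp (-2) * (y / (c+y)^2) \<le> ee b y * (y / (c+y)^2)"
        using ee_ge[OF assms(1), of y] that assms by (intro mult_right_mono) auto
      then show ?thesis unfolding Ppos_def by simp
    qed
  qed (rule ip)
  have "integral {0..1} (\<lambda>y. exp (-2) * (y / (c+y)^2)) = exp (-2) * (ln (c+1) + c/(c+1) - ln c - 1)"
    using has_integral_mult_right[OF int_ypos[OF assms(2)], of "exp (-2)"] by (simp add: integral_unique)
  then show "integral {0..B} (Ppos b c) \<ge> exp (-2) * (ln (c+1) + c/(c+1) - ln c - 1)"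
    using le1 s by linarith
  have le2: "integral {0..1} (\<lambda>y. (exp (-2) / (c+1)^2) * y) \<le> integral {0..1} (\<lambda>y. exp (-2) * (y / (c+y)^2))"
  proof (rule integral_le)
    show "(\<lambda>y. (exp (-2) / (c+1)^2) * y) integrable_on {0..1}"
      using int_y by (intro integrable_on_mult_right) blast
    show "(\<lambda>y. exp (-2) * (y / (c+y)^2)) integrable_on {0..1}"
      using iy by (rule integrable_on_mult_right)
    show "(exp (-2) / (c+1)^2) * y \<le> exp (-2) * (y / (c+y)^2)" if "y \<in> {0..1}" for y
    proof -
      have "(c+y)^2 \<le> (c+1)^2" using that assms by (intro power_mono) auto
      then have "y / (c+1)^2 \<le> y / (c+y)^2" using that assms by (intro divide_left_mono) auto
      then have "exp (-2) * (y / (c+1)^2) \<le> exp (-2) * (y / (c+y)^2)" by (intro mult_left_mono) auto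
      then show ?thesis by simp
    qed
  qed
  have "integral {0..1} (\<lambda>y. (exp (-2) / (c+1)^2) * y) = exp (-2) / (2 * (c+1)^2)"
    using int_y by (simp add: integral_unique)
  then show "integral {0..B} (Ppos b c) \<ge> exp (-2) / (2 * (c+1)^2)"
    using le1 le2 s by linarith
qed

lemma upper_Pneg:
  fixes b c B :: real assumes "b > 0" "c > 0" "B \<ge> 0"
  shows "integral {0..B} (Pneg b c) \<le> 1 / (2*b)"
proof -
  have "integral {0..B} (Pneg b c) \<le> integral {0..B} (\<lambda>y. y powr (b-1) * ee b y)"
  proof (rule integral_le)
    show "Pneg b c integrable_on {0..B}" using assms by (intro int_sub cont_Pneg) auto
    show "(\<lambda>y. y powr (b-1) * ee b y) integrable_on {0..B}" using int_Gneg[OF assms(1,3)] by blast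
    show "Pneg b c y \<le> y powr (b-1) * ee b y" if "y \<in> {0..B}" for y
    proof (cases "y = 0")
      case True then show ?thesis by (simp add: Pneg_def)
    next
      case False
      then have y: "y > 0" using that by auto
      have "y powr b / (c+y) \<le> y powr b / y" using y assms by (intro divide_left_mono) auto
      also have "\<dots> = y powr (b-1)" using y by (simp add: powr_diff)
      finally have "ee b y * (y powr b / (c+y)) \<le> ee b y * y powr (b-1)"
        using ee_pos[of b y] by (intro mult_left_mono) auto
      then show ?thesis unfolding Pneg_def by (simp add: mult.commute)
    qed
  qed
  also have "\<dots> = (1 - ee b B) / (2*b)" using int_Gneg[OF assms(1,3)] by (simp add: integral_unique)
  also have "\<dots> \<le> 1 / (2*b)" using ee_pos[of b B] assms by (intro divide_right_mono) auto
  finally show ?thesis .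
qed

lemma lower_cPneg:
  fixes b c B :: real assumes "b > 0" "c \<ge> 1" "B \<ge> 1"
  shows "c * integral {0..B} (Pneg b c) \<ge> exp (-2) / (2 * (b+1))"
proof -
  have c0: "c > 0" using assms by simp
  have s: "integral {0..1} (Pneg b c) \<le> integral {0..B} (Pneg b c)"
    using assms c0 by (intro sub01 cont_Pneg Pneg_nn) auto
  have ipw: "((\<lambda>y. y powr b) has_integral (1 / (b+1))) {0..1}"
    using has_integral_powr_from_0[of b 1] assms by simp
  have le: "integral {0..1} (\<lambda>y. (exp (-2) / (2*c)) * y powr b) \<le> integral {0..1} (Pneg b c)"
  proof (rule integral_le)
    show "(\<lambda>y. (exp (-2) / (2*c)) * y powr b) integrable_on {0..1}"
      using ipw by (intro integrable_on_mult_right) blast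
    show "Pneg b c integrable_on {0..1}" using assms c0 by (intro int_sub cont_Pneg) auto
    show "(exp (-2) / (2*c)) * y powr b \<le> Pneg b c y" if "y \<in> {0..1}" for y
    proof -
      have "exp (-2) / (2*c) \<le> ee b y / (c+y)"
        using ee_ge[OF assms(1), of y] ee_pos[of b y] that assms by (intro frac_le) auto
      then have "(exp (-2) / (2*c)) * y powr b \<le> (ee b y / (c+y)) * y powr b" by (intro mult_right_mono) auto
      then show ?thesis unfolding Pneg_def by simp
    qed
  qed
  have "integral {0..1} (\<lambda>y. (exp (-2) / (2*c)) * y powr b) = exp (-2) / (2*c) * (1 / (b+1))"
    using ipw by (simp add: integral_unique)
  then have "exp (-2) / (2*c) * (1 / (b+1)) \<le> integral {0..B} (Pneg b c)" using le s by linarith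
  then have "c * (exp (-2) / (2*c) * (1 / (b+1))) \<le> c * integral {0..B} (Pneg b c)"
    using c0 by (intro mult_left_mono) auto
  then show ?thesis using c0 by simp
qed

lemma upper_cPpos:
  fixes b c B M :: real assumes "b > 0" "c > 0" "B \<ge> 0"
    and M: "\<forall>y\<ge>0. (1+y) * exp (-(y powr b)) \<le> M / (1+y)^2" "M > 0"
  shows "c * integral {0..B} (Ppos b c) \<le> M / c"
proof -
  have id: "integral {0..B} (\<lambda>y::real. 1/(1+y)^2) \<le> 1"
  proof -
    have "integral {0..B} (\<lambda>y::real. 1/(1+y)^2) \<le> integral {0..} (\<lambda>y::real. 1/(1+y)^2)"
      using dom_int by (intro integral_subset_le int_sub) (auto intro!: continuous_intros)
    also have "\<dots> = 1" using dom_int by (simp add: integral_unique)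
    finally show ?thesis .
  qed
  have "integral {0..B} (Ppos b c) \<le> integral {0..B} (\<lambda>y. (M / c^2) * (1/(1+y)^2))"
  proof (rule integral_le)
    show "Ppos b c integrable_on {0..B}" using assms by (intro int_sub cont_Ppos) auto
    show "(\<lambda>y. (M / c^2) * (1/(1+y)^2)) integrable_on {0..B}"
      by (intro int_sub continuous_intros) auto
    show "Ppos b c y \<le> (M / c^2) * (1/(1+y)^2)" if "y \<in> {0..B}" for y
    proof -
      have y: "y \<ge> 0" using that by auto
      have "ee b y \<le> exp (-(y powr b))" unfolding ee_def by simp
      then have "ee b y * y \<le> exp (-(y powr b)) * (1+y)" using y ee_pos[of b y]
        by (intro mult_mono) auto
      then have "ee b y * y \<le> (1+y) * exp (-(y powr b))" by (simp add: mult.commute)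
      also have "\<dots> \<le> M / (1+y)^2" using M y by auto
      finally have a: "ee b y * y \<le> M / (1+y)^2" .
      have "Ppos b c y \<le> ee b y * y / c^2"
        unfolding Ppos_def using y assms ee_pos[of b y]
        by (intro divide_left_mono power_mono mult_nonneg_nonneg) auto
      also have "\<dots> \<le> (M / (1+y)^2) / c^2" using a assms by (intro divide_right_mono) auto
      finally show ?thesis by (simp add: mult.commute)
    qed
  qed
  also have "\<dots> = (M / c^2) * integral {0..B} (\<lambda>y::real. 1/(1+y)^2)" by (simp only: integral_mult_right)
  also have "\<dots> \<le> (M / c^2) * 1" using id M assms by (intro mult_left_mono) auto
  finally have "integral {0..B} (Ppos b c) \<le> M / c^2" by simp
  then have "c * integral {0..B} (Ppos b c) \<le> c * (M / c^2)" using assms by (intro mult_left_mono) auto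
  then show ?thesis using assms by (simp add: power2_eq_square)
qed



definition K :: "real \<Rightarrow> real \<Rightarrow> real" where "K b c = integral {0..} (kk b c)"

lemma K_tail: "b > 0 \<Longrightarrow> c > 0 \<Longrightarrow> ((\<lambda>B. integral {0..B} (kk b c)) \<longlongrightarrow> K b c) at_top"
  unfolding K_def by (intro L_tail abs_int_kk)

lemma K_pos:
  fixes b c :: real assumes "b \<ge> 1/2" "c > 0"
  shows "K b c > 0"
proof -
  have b: "b > 0" using assms by simp
  have "\<forall>\<^sub>F B in at_top. exp (-2) / (2 * (c+1)^2) \<le> integral {0..B} (kk b c)"
  proof (intro eventually_at_top_linorderI[of 1])
    fix B :: real assume B: "B \<ge> 1"
    have "integral {0..B} (kk b c) = HH b c B + integral {0..B} (Ppos b c) + (2*b-1) * integral {0..B} (Pneg b c)"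
      using decomp_int[OF b assms(2)] B by simp
    moreover have "HH b c B \<ge> 0" using HH_nn assms B by simp
    moreover have "(2*b-1) * integral {0..B} (Pneg b c) \<ge> 0"
      using assms B Pneg_nn by (intro mult_nonneg_nonneg integral_nonneg int_sub cont_Pneg b) auto
    moreover have "integral {0..B} (Ppos b c) \<ge> exp (-2) / (2 * (c+1)^2)"
      using lower_Ppos(2)[OF b assms(2) B] .
    ultimately show "exp (-2) / (2 * (c+1)^2) \<le> integral {0..B} (kk b c)" by linarith
  qed
  then have "exp (-2) / (2 * (c+1)^2) \<le> K b c"
    by (intro tendsto_lowerbound[OF K_tail[OF b assms(2)]]) auto
  moreover have "exp (-2) / (2 * (c+1)^2) > 0" using assms by simp
  ultimately show ?thesis by linarith
qed

lemma K_small: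
  fixes b :: real assumes "b > 0" "b < 1/2"
  shows "\<exists>c. 0 < c \<and> c < 1 \<and> K b c > 0"
proof -
  define A where "A = (1 - 2*b) / (2*b)"
  define c where "c = exp (-(exp 2 * (A + 1) + 1))"
  have A0: "A > 0" using assms unfolding A_def by simp
  have c0: "c > 0" unfolding c_def by simp
  have "exp 2 * (A + 1) > 0" using A0 by simp
  then have c1: "c < 1" unfolding c_def by simp
  have lnc: "ln c = -(exp 2 * (A + 1) + 1)" unfolding c_def by simp
  have "\<forall>\<^sub>F B in at_top. 1 \<le> integral {0..B} (kk b c)"
  proof (intro eventually_at_top_linorderI[of 1])
    fix B :: real assume B: "B \<ge> 1"
    have "integral {0..B} (kk b c) = HH b c B + integral {0..B} (Ppos b c) + (2*b-1) * integral {0..B} (Pneg b c)"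
      using decomp_int[OF assms(1) c0] B by simp
    moreover have "HH b c B \<ge> 0" using HH_nn c0 B by simp
    moreover have "(2*b-1) * integral {0..B} (Pneg b c) \<ge> (2*b-1) * (1/(2*b))"
      using upper_Pneg[OF assms(1) c0, of B] B assms by (intro mult_left_mono_neg) auto
    moreover have "integral {0..B} (Ppos b c) \<ge> exp (-2) * (ln (c+1) + c/(c+1) - ln c - 1)"
      using lower_Ppos(1)[OF assms(1) c0 B] .
    moreover have "exp (-2) * (ln (c+1) + c/(c+1) - ln c - 1) \<ge> exp (-2) * (- ln c - 1)"
      using c0 by (intro mult_left_mono) auto
    moreover have "exp (-2) * (- ln c - 1) = A + 1"
      unfolding lnc by (simp add: exp_minus field_simps)
    moreover have "(2*b-1) * (1/(2*b)) = - A" unfolding A_def using assms by (simp add: field_simps)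
    ultimately show "1 \<le> integral {0..B} (kk b c)" by linarith
  qed
  then have "1 \<le> K b c"
    by (intro tendsto_lowerbound[OF K_tail[OF assms(1) c0]]) auto
  then show ?thesis using c0 c1 by (intro exI[of _ c]) auto
qed

lemma K_large:
  fixes b :: real assumes "b > 0" "b < 1/2"
  shows "\<exists>c. 1 \<le> c \<and> K b c < 0"
proof -
  obtain M where M: "M > 0" "\<forall>y\<ge>0. (1+y) * exp (-(y powr b)) \<le> M / (1+y)^2"
    using exp_bound[OF assms(1)] by blast
  define d where "d = (1 - 2*b) * exp (-2) / (2*(b+1))"
  have d0: "d > 0" unfolding d_def using assms by simp
  define c where "c = max 1 (2 * M / d)"
  have c1: "c \<ge> 1" unfolding c_def by simp
  have c0: "c > 0" using c1 by simp
  have Mc: "M / c \<le> d / 2"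
  proof -
    have "2 * M / d \<le> c" unfolding c_def by simp
    then have "2 * M \<le> c * d" using d0 by (simp add: divide_le_eq)
    then show ?thesis using c0 by (simp add: divide_le_eq mult.commute)
  qed
  have HH0: "((\<lambda>B. c * HH b c B) \<longlongrightarrow> 0) at_top"
  proof -
    have "((\<lambda>B. c * HH b c B) \<longlongrightarrow> c * 0) at_top"
    proof (intro tendsto_mult tendsto_const)
      show "(HH b c \<longlongrightarrow> 0) at_top"
      proof (rule tendsto_sandwich[where f="\<lambda>_. 0" and h="\<lambda>B. M / (1+B)^2"])
        show "\<forall>\<^sub>F B in at_top. 0 \<le> HH b c B"
          using HH_nn[OF c0] by (intro eventually_at_top_linorderI[of 0]) auto
        show "\<forall>\<^sub>F B in at_top. HH b c B \<le> M / (1+B)^2"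
        proof (intro eventually_at_top_linorderI[of 0])
          fix B :: real assume B: "B \<ge> 0"
          have "HH b c B \<le> ee b B" unfolding HH_def using B c0 ee_pos[of b B]
            by (simp add: divide_le_eq mult_left_le)
          also have "\<dots> \<le> exp (-(B powr b))" unfolding ee_def by simp
          also have "\<dots> \<le> (1+B) * exp (-(B powr b))" using B by simp
          also have "\<dots> \<le> M / (1+B)^2" using M B by auto
          finally show "HH b c B \<le> M / (1+B)^2" .
        qed
        show "((\<lambda>B. M / (1+B)^2) \<longlongrightarrow> 0) at_top" by real_asymp
      qed simp
    qed
    then show ?thesis by simp
  qed
  have ev: "\<forall>\<^sub>F B in at_top. c * integral {0..B} (kk b c) \<le> c * HH b c B + (M / c - d)"
  proof (intro eventually_at_top_linorderI[of 1])
    fix B :: real assume B: "B \<ge> 1"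
    have "c * integral {0..B} (kk b c) = c * HH b c B + c * integral {0..B} (Ppos b c) + (2*b-1) * (c * integral {0..B} (Pneg b c))"
    proof -
      have "integral {0..B} (kk b c) = HH b c B + integral {0..B} (Ppos b c) + (2*b-1) * integral {0..B} (Pneg b c)"
        using decomp_int[OF assms(1) c0, of B] B by simp
      then have "c * integral {0..B} (kk b c) = c * (HH b c B + integral {0..B} (Ppos b c) + (2*b-1) * integral {0..B} (Pneg b c))"
        by simp
      then show ?thesis by (simp only: distrib_left mult.left_commute[of c])
    qed
    moreover have "c * integral {0..B} (Ppos b c) \<le> M / c"
      using upper_cPpos[OF assms(1) c0 _ M(2,1)] B by simp
    moreover have "(2*b-1) * (c * integral {0..B} (Pneg b c)) \<le> (2*b-1) * (exp (-2) / (2 * (b+1)))"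
      using lower_cPneg[OF assms(1) c1 B] assms by (intro mult_left_mono_neg) auto
    moreover have "(2*b-1) * (exp (-2) / (2 * (b+1))) = - d" using assms unfolding d_def by (simp add: field_simps)
    ultimately show "c * integral {0..B} (kk b c) \<le> c * HH b c B + (M / c - d)" by linarith
  qed
  have "((\<lambda>B. c * integral {0..B} (kk b c)) \<longlongrightarrow> c * K b c) at_top"
    by (intro tendsto_mult tendsto_const K_tail assms c0)
  moreover have "((\<lambda>B. c * HH b c B + (M / c - d)) \<longlongrightarrow> 0 + (M / c - d)) at_top"
    by (intro tendsto_add HH0 tendsto_const)
  ultimately have "c * K b c \<le> 0 + (M / c - d)"
    using ev by (intro tendsto_le[of at_top]) auto
  then have "c * K b c < 0" using Mc d0 by linarith
  then have "K b c < 0" using c0 by (simp add: mult_less_0_iff)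
  then show ?thesis using c1 by blast
qed



lemma K_cont:
  fixes b c0 :: real assumes "b > 0" "c0 > 0"
  shows "isCont (K b) c0"
proof (rule continuous_at_sequentiallyI)
  fix u :: "nat \<Rightarrow> real" assume u: "u \<longlonglongrightarrow> c0"
  obtain M where M: "M > 0" "\<forall>c y. c > 0 \<longrightarrow> y \<ge> 0 \<longrightarrow> \<bar>kk b c y\<bar> \<le> (M / c) / (1+y)^2"
    using kk_dom[OF assms(1)] by blast
  define v where "v n = max (u n) (c0/2)" for n
  have v0: "v n \<ge> c0/2" for n unfolding v_def by simp
  have vpos: "v n > 0" for n using v0[of n] assms by linarith
  have vlim: "v \<longlonglongrightarrow> max c0 (c0/2)" unfolding v_def by (intro tendsto_intros u)
  then have vlim': "v \<longlonglongrightarrow> c0" using assms by simp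
  have "(\<lambda>n. integral {0..} (kk b (v n))) \<longlonglongrightarrow> integral {0..} (kk b c0)"
  proof (rule dominated_convergence(2))
    show "kk b (v n) integrable_on {0..}" for n
      using abs_int_kk[OF assms(1) vpos] by (rule absolutely_integrable_on_def[THEN iffD1, THEN conjunct1])
    show "(\<lambda>y. (2 * M / c0) * (1/(1+y)^2)) integrable_on {0..}"
      using has_integral_mult_right[OF dom_int, of "2*M/c0"] by (auto simp: integrable_on_def)
    show "norm (kk b (v n) y) \<le> (2 * M / c0) * (1/(1+y)^2)" if "y \<in> {0..}" for n y
    proof -
      have "\<bar>kk b (v n) y\<bar> \<le> (M / v n) / (1+y)^2" using M vpos[of n] that by auto
      also have "\<dots> \<le> (M / (c0/2)) / (1+y)^2"
        using v0[of n] assms M by (intro divide_right_mono divide_left_mono) auto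
      finally show ?thesis by (simp add: mult.commute)
    qed
    show "(\<lambda>n. kk b (v n) y) \<longlonglongrightarrow> kk b c0 y" if "y \<in> {0..}" for y
      unfolding kk_def using that assms by (intro tendsto_intros vlim') auto
  qed
  moreover have "\<forall>\<^sub>F n in sequentially. v n = u n"
  proof -
    have "\<forall>\<^sub>F n in sequentially. u n > c0/2" using u assms by (intro order_tendstoD) auto
    then show ?thesis by eventually_elim (simp add: v_def)
  qed
  then have "\<forall>\<^sub>F n in sequentially. integral {0..} (kk b (v n)) = integral {0..} (kk b (u n))"
    by eventually_elim simp
  ultimately have "(\<lambda>n. integral {0..} (kk b (u n))) \<longlonglongrightarrow> integral {0..} (kk b c0)"
    by (rule Lim_transform_eventually)
  then show "(\<lambda>n. K b (u n)) \<longlonglongrightarrow> K b c0" unfolding K_def .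
qed

lemma K_exists:
  fixes b :: real assumes "b > 0" "b < 1/2"
  shows "\<exists>c>0. K b c = 0"
proof -
  obtain c1 where c1: "0 < c1" "c1 < 1" "K b c1 > 0" using K_small[OF assms] by blast
  obtain c2 where c2: "1 \<le> c2" "K b c2 < 0" using K_large[OF assms] by blast
  have "continuous_on {c1..c2} (K b)"
    using c1 assms by (intro continuous_at_imp_continuous_on ballI K_cont) auto
  then obtain x where "c1 \<le> x" "x \<le> c2" "K b x = 0"
    using IVT2'[of "K b" c2 0 c1] c1 c2 by auto
  then show ?thesis using c1 by (intro exI[of _ x]) auto
qed

lemma aux1: "A \<noteq> 0 \<Longrightarrow> C \<noteq> 0 \<Longrightarrow> (X / C) * (P / A) * (A*B*C) = X*P*(B::real)"
  by (simp add: field_simps)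
lemma aux2: "B \<noteq> 0 \<Longrightarrow> (P / B) * (A*B*C) = P*A*(C::real)"
  by (simp add: field_simps)

lemma K_unique:
  fixes b c1 c2 :: real assumes "b > 0" "0 < c1" "c1 < c2" "K b c1 = 0" "K b c2 = 0"
  shows False
proof -
  define r where "r = (c1+1)/(c2+1)"
  define g where "g y = r * kk b c1 y - kk b c2 y" for y
  have c2p: "c2 > 0" using assms by simp
  have ai1: "kk b c1 absolutely_integrable_on {0..}" by (intro abs_int_kk assms)
  have ai2: "kk b c2 absolutely_integrable_on {0..}" by (intro abs_int_kk assms c2p)
  have gi: "(g has_integral 0) {0..}"
  proof -
    have "(kk b c1 has_integral K b c1) {0..}" unfolding K_def
      using ai1 by (intro integrable_integral) (simp add: absolutely_integrable_on_def)
    moreover have "(kk b c2 has_integral K b c2) {0..}" unfolding K_def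
      using ai2 by (intro integrable_integral) (simp add: absolutely_integrable_on_def)
    ultimately have "(g has_integral (r * K b c1 - K b c2)) {0..}"
      unfolding g_def by (intro has_integral_diff has_integral_mult_right)
    then show ?thesis using assms by simp
  qed
  have gform: "g y = phi b y * (c2 - c1) * (1 - y) / ((c1+y)*(c2+y)*(c2+1))" if "y \<ge> 0" for y
  proof -
    have d1: "c1 + y > 0" "c2 + y > 0" "c2 + 1 > 0" using that assms by auto
    define D where "D = (c1+y)*(c2+y)*(c2+1)"
    have D0: "D > 0" unfolding D_def using d1 by simp
    have e1: "r * kk b c1 y * D = (c1+1)*phi b y*(c2+y)"
      unfolding r_def kk_def D_def using d1 by (intro aux1) auto
    have e2: "kk b c2 y * D = phi b y*(c1+y)*(c2+1)"
      unfolding kk_def D_def using d1 by (intro aux2) auto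
    have "g y * D = phi b y * ((c1+1)*(c2+y) - (c1+y)*(c2+1))"
      unfolding g_def using e1 e2 by (simp add: left_diff_distrib algebra_simps)
    also have "\<dots> = phi b y * (c2 - c1) * (1 - y)" by (simp add: algebra_simps)
    finally have "g y * D = phi b y * (c2 - c1) * (1 - y)" .
    then show ?thesis using D0 unfolding D_def[symmetric] by (simp add: eq_divide_eq)
  qed
  have gnn: "g y \<ge> 0" if "y \<ge> 0" for y
  proof -
    have "phi b y * (1 - y) \<ge> 0"
    proof (cases "y \<le> 1")
      case True
      then have "y powr b \<le> 1 powr b" using that assms by (intro powr_mono2) auto
      then show ?thesis using True unfolding phi_def by simp
    next
      case False
      then have "1 powr b \<le> y powr b" using that assms by (intro powr_mono2) auto
      then have "1 - y powr b \<le> 0" by simp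
      moreover have "1 - y < 0" using False by simp
      ultimately have "(1 - y powr b) * (1 - y) \<ge> 0" by (simp add: mult_nonpos_nonpos)
      then have "exp (- 2 * y powr b) * ((1 - y powr b) * (1 - y)) \<ge> 0" by simp
      then show ?thesis unfolding phi_def by (simp add: mult_ac)
    qed
    then have "phi b y * (1 - y) * (c2 - c1) \<ge> 0" using assms by simp
    then show ?thesis using gform[OF that] that assms
      by (simp add: mult.commute mult.left_commute)
  qed
  have g2: "g 2 > 0"
  proof -
    have "1 powr b < 2 powr b" using assms by (intro powr_less_mono2) auto
    then have "phi b 2 < 0" unfolding phi_def by (simp add: mult_less_0_iff)
    then have "phi b 2 * (c2 - c1) * (1 - 2) > 0" using assms by (simp add: mult_less_0_iff)
    moreover have "(c1+2)*(c2+2)*(c2+1) > 0" using assms by simp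
    ultimately have "phi b 2 * (c2 - c1) * (1 - 2) / ((c1+2)*(c2+2)*(c2+1)) > 0"
      by (rule divide_pos_pos)
    then show ?thesis using gform[of 2] by simp
  qed
  have gcont: "continuous_on {0..} g"
    unfolding g_def using assms c2p by (intro continuous_intros cont_kk)
  have gint: "g integrable_on {0..2}" by (intro int_sub gcont)
  have "integral {0..2} g \<le> integral {0..} g"
    using gi gint gnn by (intro integral_subset_le) auto
  also have "\<dots> = 0" using gi by (simp add: integral_unique)
  finally have "integral {0..2} g \<le> 0" .
  moreover have "integral {0..2} g \<ge> 0" using gint gnn by (intro integral_nonneg) auto
  ultimately have "(g has_integral 0) (cbox 0 2)"
    using gint by (metis cbox_interval has_integral_integral order_antisym)
  then have "g 2 = 0"
  proof (intro has_integral_0_cbox_imp_0[of 0 2 g])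
    show "continuous_on (cbox 0 2) g" using gcont by (auto elim: continuous_on_subset)
    show "0 \<le> g x" if "x \<in> box 0 2" for x using gnn that by auto
  qed auto
  then show False using g2 by simp
qed



lemma lam_eq:
  fixes a L x :: real assumes "a > 0" "L > 0" "x \<ge> 0"
  shows "lam_integrand a L x = \<bar>L powr (a/2)\<bar> * kk (2/a) (L powr (a/2)) (L powr (a/2) * x)"
proof -
  define s where "s = L powr (a/2)"
  have s0: "s > 0" unfolding s_def using assms by simp
  have sb: "s powr (2/a) = L" unfolding s_def using assms by (simp add: powr_powr)
  have m: "(s * x) powr (2/a) = L * x powr (2/a)"
    using s0 assms sb by (simp add: powr_mult)
  have "\<bar>s\<bar> * kk (2/a) s (s * x) = s * ((1 - L * x powr (2/a)) * exp (-2 * (L * x powr (2/a)))) / (s + s * x)"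
    unfolding kk_def phi_def m using s0 by simp
  also have "\<dots> = ((1 - L * x powr (2/a)) * exp (-2 * (L * x powr (2/a)))) / (1 + x)"
  proof -
    have "s + s * x = s * (1 + x)" by (simp add: algebra_simps)
    then show ?thesis using s0 assms by simp
  qed
  also have "\<dots> = lam_integrand a L x" unfolding lam_integrand_def by (simp add: mult_ac)
  finally show ?thesis unfolding s_def by simp
qed

lemma COV:
  fixes a L :: real assumes "a > 0" "L > 0"
  shows "(lam_integrand a L has_integral 0) {0<..} \<longleftrightarrow> K (2/a) (L powr (a/2)) = 0"
proof -
  define s where "s = L powr (a/2)"
  define b where "b = 2/a"
  have s0: "s > 0" unfolding s_def using assms by simp
  have b0: "b > 0" unfolding b_def using assms by simp
  have img: "(\<lambda>x. s * x) ` {0..} = {0::real..}"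
  proof
    show "(\<lambda>x. s * x) ` {0..} \<subseteq> {0..}" using s0 by auto
    show "{0..} \<subseteq> (\<lambda>x. s * x) ` {0..}"
    proof
      fix y :: real assume "y \<in> {0..}"
      then have "y = s * (y / s)" "y / s \<in> {0..}" using s0 by auto
      then show "y \<in> (\<lambda>x. s * x) ` {0..}" by blast
    qed
  qed
  have "(\<lambda>x. \<bar>s\<bar> * kk b s (s * x)) absolutely_integrable_on {0..} \<and>
        integral {0..} (\<lambda>x. \<bar>s\<bar> * kk b s (s * x)) = K b s
     \<longleftrightarrow> kk b s absolutely_integrable_on ((\<lambda>x. s * x) ` {0..}) \<and> integral ((\<lambda>x. s * x) ` {0..}) (kk b s) = K b s"
  proof (rule has_absolute_integral_change_of_variables_1')
    show "{0::real..} \<in> sets lebesgue" by (intro sets_completionI_sets) (simp add: borel_closed)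
    show "((\<lambda>x. s * x) has_field_derivative s) (at x within {0..})" for x
      by (auto intro!: derivative_eq_intros)
    show "inj_on (\<lambda>x. s * x) {0..}" using s0 by (auto simp: inj_on_def)
  qed
  moreover have "kk b s absolutely_integrable_on {0..}" by (intro abs_int_kk b0 s0)
  moreover have "integral {0..} (kk b s) = K b s" unfolding K_def ..
  ultimately have A: "(\<lambda>x. \<bar>s\<bar> * kk b s (s * x)) absolutely_integrable_on {0..}"
      "integral {0..} (\<lambda>x. \<bar>s\<bar> * kk b s (s * x)) = K b s"
    unfolding img by blast+
  have "((\<lambda>x. \<bar>s\<bar> * kk b s (s * x)) has_integral integral {0..} (\<lambda>x. \<bar>s\<bar> * kk b s (s * x))) {0..}"
    using A(1) unfolding absolutely_integrable_on_def by (intro integrable_integral) blast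
  then have "((\<lambda>x. \<bar>s\<bar> * kk b s (s * x)) has_integral K b s) {0..}"
    unfolding A(2) .
  then have "(lam_integrand a L has_integral K b s) {0..}"
    using lam_eq[OF assms] unfolding s_def b_def by (subst has_integral_cong) auto
  then have B: "(lam_integrand a L has_integral K b s) {0<..}"
  proof (subst has_integral_spike_set_eq[where T="{0..}"])
    show "negligible {x \<in> {0<..} - {0..}. lam_integrand a L x \<noteq> 0}" by (rule negligible_subset[of "{}"]) auto
    show "negligible {x \<in> {0..} - {0<..}. lam_integrand a L x \<noteq> 0}" by (rule negligible_subset[of "{0}"]) auto
  qed
  have "(lam_integrand a L has_integral 0) {0<..} \<longleftrightarrow> K b s = 0"
  proof
    assume "(lam_integrand a L has_integral 0) {0<..}"
    then show "K b s = 0" using has_integral_unique[OF B] by simp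
  next
    assume "K b s = 0"
    then show "(lam_integrand a L has_integral 0) {0<..}" using B by simp
  qed
  then show ?thesis unfolding s_def b_def .
qed



theorem lemma4:
  fixes \<alpha> :: real
  assumes "\<alpha> > 2"
  shows "(\<alpha> \<le> 4 \<longrightarrow> \<not> (\<exists>\<Lambda>>0. (lam_integrand \<alpha> \<Lambda> has_integral 0) {0<..}))
       \<and> (\<alpha> > 4 \<longrightarrow> (\<exists>!\<Lambda>. \<Lambda> > 0 \<and> (lam_integrand \<alpha> \<Lambda> has_integral 0) {0<..}))"
proof (intro conjI impI)
  have a0: "\<alpha> > 0" using assms by simp
  have b0: "2/\<alpha> > 0" using a0 by simp
  {
    assume a4: "\<alpha> \<le> 4"
    have bh: "2/\<alpha> \<ge> 1/2" using a4 a0 by (simp add: field_simps)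
    show "\<not> (\<exists>\<Lambda>>0. (lam_integrand \<alpha> \<Lambda> has_integral 0) {0<..})"
    proof
      assume "\<exists>\<Lambda>>0. (lam_integrand \<alpha> \<Lambda> has_integral 0) {0<..}"
      then obtain L where L: "L > 0" "(lam_integrand \<alpha> L has_integral 0) {0<..}" by blast
      then have "K (2/\<alpha>) (L powr (\<alpha>/2)) = 0" using COV[OF a0 L(1)] by simp
      moreover have "K (2/\<alpha>) (L powr (\<alpha>/2)) > 0" using L by (intro K_pos bh) simp
      ultimately show False by simp
    qed
  }
  {
    assume a4: "\<alpha> > 4"
    have bh: "2/\<alpha> < 1/2" using a4 a0 by (simp add: field_simps)
    obtain c where c: "c > 0" "K (2/\<alpha>) c = 0" using K_exists[OF b0 bh] by blast
    define L where "L = c powr (2/\<alpha>)"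
    have L0: "L > 0" unfolding L_def using c by simp
    have "L powr (\<alpha>/2) = c" unfolding L_def using a0 c by (simp add: powr_powr)
    then have ex: "(lam_integrand \<alpha> L has_integral 0) {0<..}" using COV[OF a0 L0] c by simp
    show "\<exists>!\<Lambda>. \<Lambda> > 0 \<and> (lam_integrand \<alpha> \<Lambda> has_integral 0) {0<..}"
    proof (rule ex1I[of _ L])
      show "L > 0 \<and> (lam_integrand \<alpha> L has_integral 0) {0<..}" using L0 ex by simp
      fix M assume M: "M > 0 \<and> (lam_integrand \<alpha> M has_integral 0) {0<..}"
      have KM: "K (2/\<alpha>) (M powr (\<alpha>/2)) = 0" using COV[OF a0, of M] M by simp
      have KL: "K (2/\<alpha>) (L powr (\<alpha>/2)) = 0" using COV[OF a0 L0] ex by simp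
      have pM: "M powr (\<alpha>/2) > 0" using M by simp
      have pL: "L powr (\<alpha>/2) > 0" using L0 by simp
      have eq: "M powr (\<alpha>/2) = L powr (\<alpha>/2)"
      proof (rule ccontr)
        assume ne: "M powr (\<alpha>/2) \<noteq> L powr (\<alpha>/2)"
        show False
        proof (cases "M powr (\<alpha>/2) < L powr (\<alpha>/2)")
          case True
          show False by (rule K_unique[OF b0 pM True KM KL])
        next
          case False
          then have "L powr (\<alpha>/2) < M powr (\<alpha>/2)" using ne by simp
          show False by (rule K_unique[OF b0 pL \<open>L powr (\<alpha>/2) < M powr (\<alpha>/2)\<close> KL KM])
        qed
      qed
      have "(M powr (\<alpha>/2)) powr (2/\<alpha>) = (L powr (\<alpha>/2)) powr (2/\<alpha>)" using eq by simp
      then show "M = L" using M L0 a0 by (simp add: powr_powr)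
    qed
  }
qed

end
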